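(* Let $A$ be an associative $F$-algebra graded by $\mathbb Z^n$, equipped with a bicharacter $p$ on homogeneous elements (so $p_{uu',v}=p_{u,v}p_{u',v}$ and $p_{u,vv'}=p_{u,v}p_{u,v'}$). Let $u_1,\dots,u_m\in A$ be homogeneous elements such that for all $1\le i,j\le m$, $u_iu_j=p_{u_i,u_j}u_ju_i$ with $p_{u_i,u_j}\in F^*$, $p_{u_i,u_j}p_{u_j,u_i}=1$, and $p_{u_i,u_j}=1$ whenever $u_i=u_j$. Then $$[u_1,\dots,u_m]_R=\prod_{j=1}^{m-1}p_{u_m\cdots u_{j+1},\,u_j}\bigl(p_{u_j,\,u_m\cdots u_{j+1}}^{3}-1\bigr)\,u_m\cdots u_2u_1,$$ where $[u_1,\dots,u_m]_R:=[u_1,[u_2,\cdots[u_{m-1},u_m]_R\cdots]_R]_R$.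
   Context: For homogeneous $u,v$, $[u,v]_R=p_{u,v}uv-p_{v,u}vu$, extended bilinearly. Typical instance: $A=\mathfrak B(V)$ for a braided vector space of diagonal type with matrix $(p_{i,j})$, graded by $\deg x_i=e_i$, with $p_{u,v}=\prod_{i,j}p_{i,j}^{a_ib_j}$ for $\deg u=\sum a_ie_i$, $\deg v=\sum b_je_j$. *)

theory Defs
  imports "HOL-Analysis.Finite_Cartesian_Product"
begin

definition F_algebra :: "('f::field \<Rightarrow> 'a::ring_1 \<Rightarrow> 'a) \<Rightarrow> bool" where
  "F_algebra sm \<longleftrightarrow> module sm \<and>
     (\<forall>c x y. sm c (x * y) = sm c x * y \<and> sm c (x * y) = x * sm c y)"

definition graded_by :: "('f::field \<Rightarrow> 'a::ring_1 \<Rightarrow> 'a) \<Rightarrow> (int ^ 'n \<Rightarrow> 'a set) \<Rightarrow> bool" where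
  "graded_by sm Agr \<longleftrightarrow>
     (\<forall>g. module.subspace sm (Agr g)) \<and>
     (\<forall>g h x y. x \<in> Agr g \<longrightarrow> y \<in> Agr h \<longrightarrow> x * y \<in> Agr (g + h)) \<and>
     (\<forall>x. \<exists>S f. finite S \<and> (\<forall>g\<in>S. f g \<in> Agr g) \<and> x = (\<Sum>g\<in>S. f g)) \<and>
     (\<forall>S f. finite S \<longrightarrow> (\<forall>g\<in>S. f g \<in> Agr g) \<longrightarrow> (\<Sum>g\<in>S. f g) = 0 \<longrightarrow> (\<forall>g\<in>S. f g = 0))"

definition bicharacter :: "(int ^ 'n \<Rightarrow> int ^ 'n \<Rightarrow> 'f::field) \<Rightarrow> bool" where
  "bicharacter p \<longleftrightarrow> (\<forall>g h. p g h \<noteq> 0) \<and>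
     (\<forall>g g' h. p (g + g') h = p g h * p g' h) \<and>
     (\<forall>g h h'. p g (h + h') = p g h * p g h')"

definition rbr :: "('f::field \<Rightarrow> 'a::ring_1 \<Rightarrow> 'a) \<Rightarrow> (int ^ 'n \<Rightarrow> int ^ 'n \<Rightarrow> 'f)
     \<Rightarrow> int ^ 'n \<Rightarrow> int ^ 'n \<Rightarrow> 'a \<Rightarrow> 'a \<Rightarrow> 'a" where
  "rbr sm p a b u v = sm (p a b) (u * v) - sm (p b a) (v * u)"

text \<open>Iterated right-nested bracket [u_i1,[u_i2,...[u_i(k-1),u_ik]_R...]_R]_R over a list of
  indices; the inner bracket is homogeneous of degree the sum of the degrees.\<close>
fun iter_rbr :: "('f::field \<Rightarrow> 'a::ring_1 \<Rightarrow> 'a) \<Rightarrow> (int ^ 'n \<Rightarrow> int ^ 'n \<Rightarrow> 'f)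
     \<Rightarrow> (nat \<Rightarrow> 'a) \<Rightarrow> (nat \<Rightarrow> int ^ 'n) \<Rightarrow> nat list \<Rightarrow> 'a" where
  "iter_rbr sm p u d [] = 0"
| "iter_rbr sm p u d [i] = u i"
| "iter_rbr sm p u d (i # j # is) =
     rbr sm p (d i) (sum_list (map d (j # is))) (u i) (iter_rbr sm p u d (j # is))"

end

theory Submission imports Defs begin
lemma bich_zero: assumes "bicharacter p" shows "p g 0 = 1" "p 0 g = 1"
proof -
  have a: "p g 0 \<noteq> 0" "p 0 g \<noteq> 0" using assms unfolding bicharacter_def by auto
  have "p g (0+0) = p g 0 * p g 0" "p (0+0) g = p 0 g * p 0 g" using assms unfolding bicharacter_def by blast+
  then show "p g 0 = 1" "p 0 g = 1" using a by auto
qed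

lemma bich_right: assumes "bicharacter p"
  shows "p g (sum_list (map d xs)) = prod_list (map (\<lambda>i. p g (d i)) xs)"
  using assms by (induction xs) (auto simp: bich_zero bicharacter_def)

lemma bich_left: assumes "bicharacter p"
  shows "p (sum_list (map d xs)) g = prod_list (map (\<lambda>i. p (d i) g) xs)"
  using assms by (induction xs) (auto simp: bich_zero bicharacter_def)

lemma comm_list:
  fixes sm :: "'f::field \<Rightarrow> 'a::ring_1 \<Rightarrow> 'a"
  assumes alg: "F_algebra sm" and "set xs \<subseteq> S" and j: "j \<in> S"
    and comm: "\<forall>i\<in>S. \<forall>k\<in>S. u i * u k = sm (p (d i) (d k)) (u k * u i)"
  shows "u j * prod_list (map u xs) = sm (prod_list (map (\<lambda>i. p (d j) (d i)) xs)) (prod_list (map u xs) * u j)"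
  using assms(2)
proof (induction xs)
  case Nil
  interpret module sm using alg unfolding F_algebra_def by blast
  show ?case by simp
next
  case (Cons x xs)
  interpret module sm using alg unfolding F_algebra_def by blast
  have sl: "\<And>c a b. sm c (a * b) = sm c a * b" and sr: "\<And>c a b. sm c (a * b) = a * sm c b"
    using alg unfolding F_algebra_def by blast+
  let ?P = "prod_list (map u xs)"
  have "u j * prod_list (map u (x # xs)) = (u j * u x) * ?P" by (simp add: mult.assoc)
  also have "\<dots> = sm (p (d j) (d x)) (u x * u j) * ?P"
  proof -
    have "x \<in> S" using Cons.prems by simp
    then have "u j * u x = sm (p (d j) (d x)) (u x * u j)" using comm j by blast
    then show ?thesis by (rule arg_cong)
  qed
  also have "\<dots> = sm (p (d j) (d x)) (u x * (u j * ?P))" by (simp only: sl[symmetric] mult.assoc)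
  also have "\<dots> = sm (p (d j) (d x)) (u x * sm (prod_list (map (\<lambda>i. p (d j) (d i)) xs)) (?P * u j))"
    using Cons by simp
  also have "\<dots> = sm (prod_list (map (\<lambda>i. p (d j) (d i)) (x#xs))) (prod_list (map u (x # xs)) * u j)"
    by (simp only: sr[symmetric] mult.assoc scale_scale list.map prod_list.Cons)
  finally show ?case .
qed

theorem lemma3p3:
  fixes sm :: "'f::field \<Rightarrow> 'a::ring_1 \<Rightarrow> 'a"
    and Agr :: "int ^ 'n \<Rightarrow> 'a set"
    and p :: "int ^ 'n \<Rightarrow> int ^ 'n \<Rightarrow> 'f"
    and u :: "nat \<Rightarrow> 'a" and d :: "nat \<Rightarrow> int ^ 'n" and m :: nat
  assumes alg: "F_algebra sm"
    and gr: "graded_by sm Agr"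
    and bich: "bicharacter p"
    and m1: "m \<ge> 1"
    and hom: "\<forall>i\<in>{1..m}. u i \<in> Agr (d i)"
    and comm: "\<forall>i\<in>{1..m}. \<forall>j\<in>{1..m}. u i * u j = sm (p (d i) (d j)) (u j * u i)"
    and nz: "\<forall>i\<in>{1..m}. \<forall>j\<in>{1..m}. p (d i) (d j) \<noteq> 0"
    and inv: "\<forall>i\<in>{1..m}. \<forall>j\<in>{1..m}. p (d i) (d j) * p (d j) (d i) = 1"
    and diag: "\<forall>i\<in>{1..m}. \<forall>j\<in>{1..m}. u i = u j \<longrightarrow> p (d i) (d j) = 1"
  shows "iter_rbr sm p u d [1..<m+1] =
    sm (\<Prod>j=1..m-1. p (\<Sum>k=j+1..m. d k) (d j) * (p (d j) (\<Sum>k=j+1..m. d k) ^ 3 - 1))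
       (prod_list (map u (rev [1..<m+1])))"
proof -
  interpret module sm using alg unfolding F_algebra_def by blast
  have sl: "\<And>c a b. sm c (a * b) = sm c a * b" and sr: "\<And>c a b. sm c (a * b) = a * sm c b"
    using alg unfolding F_algebra_def by blast+
  define c where "c j = p (\<Sum>k=j+1..m. d k) (d j) * (p (d j) (\<Sum>k=j+1..m. d k) ^ 3 - 1)" for j
  have main: "iter_rbr sm p u d [j..<m+1] = sm (\<Prod>i=j..m-1. c i) (prod_list (map u (rev [j..<m+1])))"
    if "1 \<le> j" "j \<le> m" for j
    using that
  proof (induction "m - j" arbitrary: j)
    case 0
    then have "j = m" by simp
    then show ?case using m1 by simp
  next
    case (Suc n)
    define xs where "xs = [j+1..<m+1]"
    have jm: "j + 1 \<le> m" using Suc by simp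
    have xs: "[j..<m+1] = j # xs" "xs = (j+1) # [j+2..<m+1]" using jm unfolding xs_def
      by (simp_all add: upt_conv_Cons)
    have IH: "iter_rbr sm p u d xs = sm (\<Prod>i=j+1..m-1. c i) (prod_list (map u (rev xs)))"
      unfolding xs_def using Suc jm by simp
    define D where "D = sum_list (map d xs)"
    have Dsum: "D = (\<Sum>k=j+1..m. d k)" unfolding D_def xs_def
      by (simp only: sum_list_distinct_conv_sum_set distinct_upt set_upt) (simp add: atLeastLessThanSuc_atLeastAtMost)
    have setxs: "set (rev xs) \<subseteq> {1..m}" unfolding xs_def using Suc by auto
    have jin: "j \<in> {1..m}" using Suc by simp
    define V where "V = prod_list (map u (rev xs))"
    define a where "a = p (d j) D"
    define b where "b = p D (d j)"
    have com: "u j * V = sm a (V * u j)"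
      unfolding V_def a_def D_def
      using comm_list[where p=p and d=d, OF alg setxs jin comm] bich_right[OF bich, of "d j" d "rev xs"]
      by (simp add: sum_list_rev rev_map[symmetric] del: rev_map)
    have ab: "b * a = 1"
    proof -
      have "b * a = prod_list (map (\<lambda>i. p (d i) (d j) * p (d j) (d i)) xs)"
        unfolding a_def b_def D_def bich_right[OF bich] bich_left[OF bich]
        by (induction xs) (simp_all add: mult_ac)
      also have "\<dots> = 1" using setxs jin inv
        by (induction xs) auto
      finally show ?thesis .
    qed
    have cj: "c j = a * a - b"
    proof -
      have "c j = b * (a^3 - 1)" unfolding c_def a_def b_def Dsum ..
      also have "\<dots> = (b * a) * a * a - b" by (simp add: algebra_simps power3_eq_cube)
      finally show ?thesis using ab by simp
    qed
    define C where "C = (\<Prod>i=j+1..m-1. c i)"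
    have pc: "(\<Prod>i=j..m-1. c i) = c j * C" unfolding C_def using jm
      by (simp add: prod.atLeast_Suc_atMost)
    have "iter_rbr sm p u d [j..<m+1] = rbr sm p (d j) D (u j) (sm C V)"
    proof -
      have "iter_rbr sm p u d (j # xs) = rbr sm p (d j) D (u j) (iter_rbr sm p u d xs)"
        unfolding D_def using xs(2) by (cases xs) (simp_all only: iter_rbr.simps list.inject list.distinct)
      then show ?thesis unfolding xs(1) IH C_def V_def .
    qed
    also have "\<dots> = sm (a * C) (u j * V) - sm (b * C) (V * u j)"
    proof -
      have e1: "u j * sm C V = sm C (u j * V)" by (rule sr[symmetric])
      have e2: "sm C V * u j = sm C (V * u j)" by (rule sl[symmetric])
      show ?thesis unfolding rbr_def a_def[symmetric] b_def[symmetric] e1 e2 scale_scale ..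
    qed
    also have "\<dots> = sm ((a * a - b) * C) (V * u j)"
    proof -
      have "(a*a-b)*C = (a*C)*a - b*C" by (simp add: algebra_simps)
      then show ?thesis by (simp only: com scale_scale scale_left_diff_distrib)
    qed
    also have "\<dots> = sm (\<Prod>i=j..m-1. c i) (prod_list (map u (rev [j..<m+1])))"
      unfolding pc cj xs(1) V_def by (simp only: rev.simps list.map map_append prod_list.append prod_list.Cons prod_list.Nil mult_1_right)
    finally show ?case .
  qed
  have "iter_rbr sm p u d [1..<m+1] = sm (\<Prod>i=1..m-1. c i) (prod_list (map u (rev [1..<m+1])))"
    using main[of 1] m1 by blast
  then show ?thesis unfolding c_def .
qed
end
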